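(* Let $p=a/b$ with $a,b$ positive coprime integers and $b\not\equiv 0\pmod 4$. Set $k'=b$ if $b$ is even and $k'=2b$ if $b$ is odd. Let $(\Delta_L^{(m)})_{m\ge 1}$ be any real sequence satisfying $\Delta_L^{(m+1)}=\Delta_L^{(m)}+1+2p-2\lceil\Delta_L^{(m)}\rceil$ for all $m\ge1$ (with arbitrary real initial value $\Delta_L^{(1)}$). Then $\Delta_L^{(m+k')}=\Delta_L^{(m)}$ for all $m\ge 1$; equivalently, $$k'p+\sum_{l=0}^{k'-1}(-1)^l\lceil \Delta_L^{(m)}+2lp\rceil=0\quad\text{for all } m\ge1 .$$
   Context: $\lceil\cdot\rceil$ denotes the ceiling function. The recursion for $\Delta_L$ is the "leading-order" approximation of the extremum-to-extremum evolution of the dynamical system $p(i+1)=p(i)-\operatorname{sgn}x(i)$, $x(i+1)=x(i)+p(i)-\operatorname{sgn}x(i)$. *)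

theory Defs
  imports Complex_Main
begin

end

theory Submission
  imports Defs
begin

fun Tseq :: "real \<Rightarrow> real \<Rightarrow> nat \<Rightarrow> int" where
  "Tseq x q 0 = 0"
| "Tseq x q (Suc l) = 1 - Tseq x q l - 2 * \<lceil>x + 2 * real l * q\<rceil>"

lemma alt_sum: "(\<Sum>l<n. (-1::int) ^ l) = (if even n then 0 else 1)"
  by (induction n) auto

lemma sum_split_gen: "(\<Sum>l<h+n. f l) = (\<Sum>l<h. f l) + (\<Sum>l<n. f (h + l))" for f :: "nat \<Rightarrow> int"
  by (induction n) (simp_all add: add.assoc)

lemma sum_split: "(\<Sum>l<h+h. f l) = (\<Sum>l<h. f l) + (\<Sum>l<h. f (h + l))" for f :: "nat \<Rightarrow> int"
  by (rule sum_split_gen)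

lemma lemA:
  fixes x q :: real and h :: nat and N :: int
  assumes "odd h" and "2 * real h * q = of_int N"
  shows "(\<Sum>l<2*h. (-1::int) ^ l * \<lceil>x + 2 * real l * q\<rceil>) = - N"
proof -
  define g where "g = (\<lambda>l::nat. (-1::int) ^ l * \<lceil>x + 2 * real l * q\<rceil>)"
  have eq: "g l + g (h + l) = - ((-1) ^ l * N)" for l
  proof -
    have "2 * real (h + l) * q = 2 * real h * q + 2 * real l * q" by (simp add: ring_distribs)
    hence "x + 2 * real (h + l) * q = (x + 2 * real l * q) + of_int N"
      using assms(2) by linarith
    hence c: "\<lceil>x + 2 * real (h + l) * q\<rceil> = \<lceil>x + 2 * real l * q\<rceil> + N" by (simp only: ceiling_add_of_int)
    have s: "(-1::int) ^ (h + l) = - ((-1) ^ l)" using assms(1) by (simp add: power_add)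
    show ?thesis unfolding g_def c s by (simp add: ring_distribs)
  qed
  have hh: "2 * h = h + h" by simp
  have "(\<Sum>l<2*h. g l) = (\<Sum>l<h. g l) + (\<Sum>l<h. g (h + l))"
    unfolding hh by (rule sum_split)
  also have "\<dots> = (\<Sum>l<h. g l + g (h + l))" by (simp only: sum.distrib)
  also have "\<dots> = (\<Sum>l<h. - ((-1) ^ l * N))" using eq by simp
  also have "\<dots> = - (N * (\<Sum>l<h. (-1) ^ l))" by (simp add: sum_negf sum_distrib_left mult.commute)
  also have "\<dots> = - N" using assms(1) by (simp add: alt_sum)
  finally show ?thesis unfolding g_def .
qed

lemma Tseq_closed:
  "(-1::int) ^ l * Tseq x q l = (\<Sum>j<l. (-1) ^ (j+1) * (1 - 2 * \<lceil>x + 2 * real j * q\<rceil>))"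
proof (induction l)
  case 0 then show ?case by simp
next
  case (Suc l)
  have "(-1::int) ^ Suc l * Tseq x q (Suc l) = ((-1) ^ l * Tseq x q l) + (-1) ^ (l+1) * (1 - 2 * \<lceil>x + 2 * real l * q\<rceil>)"
  proof -
    have e: "(-1::int) ^ Suc l = - ((-1) ^ l)" "(-1::int) ^ (l+1) = - ((-1) ^ l)" by simp_all
    show ?thesis unfolding e Tseq.simps by (simp add: right_diff_distrib)
  qed
  then show ?case using Suc by simp
qed

lemma dyn:
  fixes D :: "nat \<Rightarrow> real"
  assumes rec: "\<And>m. m \<ge> 1 \<Longrightarrow> D (m + 1) = D m + 1 + 2 * q - 2 * of_int \<lceil>D m\<rceil>"
    and m: "m \<ge> 1"
  shows "D (m + l) = D m + 2 * real l * q + of_int (Tseq (D m) q l)"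
proof (induction l)
  case 0 then show ?case by simp
next
  case (Suc l)
  have c: "\<lceil>D (m + l)\<rceil> = \<lceil>D m + 2 * real l * q\<rceil> + Tseq (D m) q l"
    using Suc by simp
  have "D (m + Suc l) = D (m + l) + 1 + 2 * q - 2 * of_int \<lceil>D (m + l)\<rceil>"
    using rec[of "m + l"] m by simp
  also have "\<dots> = D m + 2 * real (Suc l) * q + of_int (Tseq (D m) q (Suc l))"
    unfolding c using Suc by (simp add: algebra_simps)
  finally show ?case .
qed

theorem lemma1:
  fixes a b :: int and p :: real and k' :: nat and D :: "nat \<Rightarrow> real"
  assumes "a > 0" and "b > 0" and "coprime a b" and "\<not> (4 dvd b)"
    and "p = of_int a / of_int b"
    and "k' = (if even b then nat b else 2 * nat b)"
    and "\<And>m. m \<ge> 1 \<Longrightarrow> D (m + 1) = D m + 1 + 2 * p - 2 * of_int \<lceil>D m\<rceil>"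
  shows "(\<forall>m\<ge>1. D (m + k') = D m) \<and>
         (\<forall>m\<ge>1. real k' * p + (\<Sum>l<k'. (-1) ^ l * of_int \<lceil>D m + 2 * real l * p\<rceil>) = 0)"
proof -
  obtain h :: nat and N :: int where hN: "odd h" "2 * real h * p = of_int N" "k' = 2 * h"
  proof (cases "even b")
    case True
    then obtain c where bc: "b = 2 * c" by blast
    have "odd c" using assms(4) bc by auto
    have "c > 0" using assms(2) bc by simp
    show ?thesis
    proof (rule that[of "nat c" a])
      show "odd (nat c)" using \<open>odd c\<close> \<open>c > 0\<close> by (simp add: even_nat_iff)
      show "2 * real (nat c) * p = of_int a" using \<open>c > 0\<close> bc assms(5) by simp
      show "k' = 2 * nat c" using assms(6) True bc \<open>c > 0\<close> by simp
    qed
  next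
    case False
    show ?thesis
    proof (rule that[of "nat b" "2 * a"])
      show "odd (nat b)" using False assms(2) by (simp add: even_nat_iff)
      show "2 * real (nat b) * p = of_int (2 * a)" using assms(2,5) by simp
      show "k' = 2 * nat b" using assms(6) False by simp
    qed
  qed
  have S: "(\<Sum>l<k'. (-1::real) ^ l * of_int \<lceil>x + 2 * real l * p\<rceil>) = - of_int N" for x
  proof -
    have "(\<Sum>l<k'. (-1::real) ^ l * of_int \<lceil>x + 2 * real l * p\<rceil>)
        = of_int (\<Sum>l<2*h. (-1::int) ^ l * \<lceil>x + 2 * real l * p\<rceil>)" using hN(3) by simp
    also have "\<dots> = - of_int N" using lemA[OF hN(1,2)] by simp
    finally show ?thesis .
  qed
  have kp: "real k' * p = of_int N" using hN by simp
  have part1: "D (m + k') = D m" if "m \<ge> 1" for m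
  proof -
    have d: "D (m + k') = D m + 2 * real k' * p + of_int (Tseq (D m) p k')"
      using dyn[of D p m k', OF assms(7) that] by blast
    have "(-1::int) ^ k' * Tseq (D m) p k' = (\<Sum>j<k'. (-1) ^ (j+1) * (1 - 2 * \<lceil>D m + 2 * real j * p\<rceil>))"
      by (rule Tseq_closed)
    also have "\<dots> = - (\<Sum>j<k'. (-1) ^ j) + 2 * (\<Sum>j<k'. (-1::int) ^ j * \<lceil>D m + 2 * real j * p\<rceil>)"
      by (simp add: sum_subtractf sum_distrib_left algebra_simps sum_negf)
    also have "\<dots> = - 2 * N" using lemA[OF hN(1,2), of "D m"] hN(3) by (simp add: alt_sum)
    finally have "Tseq (D m) p k' = - 2 * N" using hN(3) by simp
    thus ?thesis using d kp by simp
  qed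
  show ?thesis using part1 S kp by simp
qed

end
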